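(* Let $n, t', r$ be positive integers and let $T$ be a $(t'+2r)$-element subset of $[n]$. For any distinct $A, B\in \binom{T}{r+t'}$, setting $w=\left\lfloor\frac{|A \cap B|}{t'}\right\rfloor+1$, there exist $A_1, A_2, \ldots, A_{2w} \in \binom{T}{r+t'}$ such that (1) $|A_i \cap A_{i+1}|=t'$ for $i=1,\ldots, 2w-1$; (2) $A_1=B$ and $A_{2w}=A$.
   Context: $[n]=\{1,\dots,n\}$ and $\binom{D}{k}$ denotes the family of all $k$-element subsets of a finite set $D$. *)

theory Defs
  imports Main
begin

definition ksubsets :: "'a set \<Rightarrow> nat \<Rightarrow> 'a set set" where
  "ksubsets D k = {S. S \<subseteq> D \<and> card S = k}"

end

theory Submission
  imports Defs
begin

lemma inter_ge:
  assumes fin: "finite T" and cT: "card T = t' + 2*r"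
    and A: "A \<subseteq> T" "card A = r + t'" and B: "B \<subseteq> T" "card B = r + t'"
  shows "card (A \<inter> B) \<ge> t'" and "card (T - (A \<union> B)) = card (A \<inter> B) - t'"
proof -
  have fA: "finite A" "finite B" using A B fin finite_subset by auto
  have cU: "card (A \<union> B) + card (A \<inter> B) = 2*(r+t')"
    using card_Un_Int[OF fA] A B by simp
  have "card (A \<union> B) \<le> card T" using card_mono[OF fin] A B by auto
  then show "card (A \<inter> B) \<ge> t'" using cU cT by simp
  have "card (T - (A \<union> B)) = card T - card (A \<union> B)"
    using card_Diff_subset[of "A \<union> B" T] A B fA by auto
  then show "card (T - (A \<union> B)) = card (A \<inter> B) - t'" using cU cT by simp
qed

lemma two_step:
  assumes fin: "finite T" and cT: "card T = t' + 2*r"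
    and A: "A \<subseteq> T" "card A = r + t'" and B: "B \<subseteq> T" "card B = r + t'"
    and s: "card (A \<inter> B) > t'"
  shows "\<exists>X Y. X \<subseteq> T \<and> card X = r+t' \<and> Y \<subseteq> T \<and> card Y = r+t' \<and>
     card (B \<inter> X) = t' \<and> card (X \<inter> Y) = t' \<and>
     card (A \<inter> Y) = card (A \<inter> B) - min t' (card (A \<inter> B) - t')"
proof -
  define s where "s = card (A \<inter> B)"
  define j where "j = min t' (s - t')"
  define D where "D = A \<inter> B"
  define E where "E = T - (A \<union> B)"
  have fA: "finite A" "finite B" using A B fin finite_subset by auto
  have cE: "card E = s - t'" using inter_ge[OF fin cT A B] unfolding E_def s_def by simp
  have cD: "card D = s" unfolding D_def s_def by simp
  have "j \<le> card D" using cD s j_def s_def by simp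
  then obtain S0 where S0: "S0 \<subseteq> D" "card S0 = j" using obtain_subset_with_card_n by metis
  have "j \<le> card E" using cE j_def by simp
  then obtain S1 where S1: "S1 \<subseteq> E" "card S1 = j" using obtain_subset_with_card_n by metis
  have fS0: "finite S0" "finite S1" using S0 S1 fA fin finite_subset unfolding D_def E_def by auto
  have S0B: "S0 \<subseteq> B" using S0 D_def by auto
  have cBS0: "card (B - S0) = r + t' - j" using card_Diff_subset[OF fS0(1) S0B] B S0 by simp
  have "t' - j \<le> card (B - S0)" using cBS0 by simp
  then obtain S2 where S2: "S2 \<subseteq> B - S0" "card S2 = t' - j" using obtain_subset_with_card_n by metis
  have fS2: "finite S2" using S2 fA finite_subset by blast
  define S where "S = S0 \<union> S2"
  have cS: "card S = t'" unfolding S_def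
    using card_Un_disjoint[OF fS0(1) fS2] S2 S0 j_def by auto
  have fS: "finite S" using S_def fS0 fS2 by simp
  define X where "X = (T - B) \<union> S"
  define Y where "Y = (B - S0) \<union> S1"
  have cTB: "card (T - B) = r" using card_Diff_subset[OF fA(2) B(1)] B cT by simp
  have XT: "X \<subseteq> T" using X_def S_def S0B S2 B by auto
  have cX: "card X = r + t'" unfolding X_def
    using card_Un_disjoint[of "T - B" S] fin fS cTB cS S_def S0B S2 by auto
  have YT: "Y \<subseteq> T" using Y_def S1 E_def B by auto
  have cY: "card Y = r + t'" unfolding Y_def
    using card_Un_disjoint[of "B - S0" S1] fA fS0 cBS0 S1 E_def j_def s cBS0 S0 D_def
    by (auto simp: s_def)
  have "B \<inter> X = S" unfolding X_def S_def using S0B S2 by auto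
  then have c1: "card (B \<inter> X) = t'" using cS by simp
  have "X \<inter> Y = S1 \<union> S2" unfolding X_def Y_def S_def using S0B S2 S1 E_def by auto
  moreover have "S1 \<inter> S2 = {}" using S1 S2 E_def by auto
  ultimately have c2: "card (X \<inter> Y) = t'" using card_Un_disjoint[OF fS0(2) fS2] S1 S2 j_def by simp
  have "A \<inter> Y = D - S0" unfolding Y_def D_def using S1 E_def by auto
  then have c3: "card (A \<inter> Y) = s - j" using card_Diff_subset[OF fS0(1) S0(1)] cD S0 by simp
  show ?thesis using XT cX YT cY c1 c2 c3 unfolding s_def j_def by blast
qed

lemma walk:
  assumes fin: "finite T" and cT: "card T = t' + 2*r" and tp: "t' > 0"
    and A: "A \<subseteq> T" "card A = r + t'"
  shows "B \<subseteq> T \<Longrightarrow> card B = r + t' \<Longrightarrow> (card (A \<inter> B) + t' - 1) div t' \<le> m \<Longrightarrow>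
    \<exists>As :: nat \<Rightarrow> nat set.
      (\<forall>i\<in>{1..2*m}. As i \<in> ksubsets T (r + t')) \<and>
      (\<forall>i\<in>{1..2*m-1}. card (As i \<inter> As (i+1)) = t') \<and>
      As 1 = B \<and> As (2*m) = A"
proof (induction m arbitrary: B)
  case 0
  have "card (A \<inter> B) \<ge> t'" using inter_ge[OF fin cT A 0(1,2)] by simp
  then have "card (A \<inter> B) + t' - 1 \<ge> t'" using tp by simp
  then have "(card (A \<inter> B) + t' - 1) div t' \<ge> 1" using tp
    by (metis div_le_mono div_self less_not_refl)
  then show ?case using 0 by simp
next
  case (Suc m)
  define s where "s = card (A \<inter> B)"
  have sge: "s \<ge> t'" using inter_ge[OF fin cT A Suc(2,3)] s_def by simp
  show ?case
  proof (cases "s = t'")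
    case True
    define As where "As = (\<lambda>i::nat. if odd i then B else A)"
    have "\<forall>i\<in>{1..2*Suc m}. As i \<in> ksubsets T (r + t')"
      using A Suc(2,3) by (auto simp: As_def ksubsets_def)
    moreover have "\<forall>i\<in>{1..2*Suc m-1}. card (As i \<inter> As (i+1)) = t'"
      using True s_def by (auto simp: As_def Int_commute)
    moreover have "As 1 = B \<and> As (2*Suc m) = A" by (simp add: As_def)
    ultimately show ?thesis by blast
  next
    case False
    then have sg: "s > t'" using sge by simp
    obtain X Y where XY: "X \<subseteq> T" "card X = r+t'" "Y \<subseteq> T" "card Y = r+t'"
      "card (B \<inter> X) = t'" "card (X \<inter> Y) = t'"
      "card (A \<inter> Y) = s - min t' (s - t')"
      using two_step[OF fin cT A Suc(2,3)] sg s_def by blast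
    have key: "(s + t' - 1) div t' = (s - 1) div t' + 1"
      using tp sg by (metis Nat.add_diff_assoc2 One_nat_def Suc_leI add_gr_0 div_add_self2
          less_imp_le_nat nat_neq_iff not_less_zero)
    have ge1: "(s - 1) div t' \<ge> 1" using sg tp
      by (metis One_nat_def Suc_pred div_le_mono div_self le_less_Suc_eq less_Suc_eq_le
          less_imp_le_nat nat_neq_iff not_less_zero)
    have m1: "m \<ge> 1" using Suc(4) key ge1 s_def by simp
    have "(card (A \<inter> Y) + t' - 1) div t' \<le> m"
    proof (cases "s - t' \<le> t'")
      case True
      then have "card (A \<inter> Y) = t'" using XY(7) sg by simp
      then have "(card (A \<inter> Y) + t' - 1) div t' = 1" using tp
        by (metis Suc_pred add_diff_assoc2 div_add_self2 div_less less_Suc_eq_le less_one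
            add_0 One_nat_def le_refl nat_neq_iff not_less_zero diff_less)
      then show ?thesis using m1 by simp
    next
      case False
      then have "card (A \<inter> Y) = s - t'" using XY(7) by simp
      then have "card (A \<inter> Y) + t' - 1 = s - 1" using sg by simp
      then show ?thesis using Suc(4) key s_def by simp
    qed
    then obtain As where As: "\<forall>i\<in>{1..2*m}. As i \<in> ksubsets T (r + t')"
      "\<forall>i\<in>{1..2*m-1}. card (As i \<inter> As (i+1)) = t'" "As 1 = Y" "As (2*m) = A"
      using Suc.IH[OF XY(3,4)] by blast
    define Bs where "Bs = (\<lambda>i::nat. if i = 1 then B else if i = 2 then X else As (i-2))"
    have "\<forall>i\<in>{1..2*Suc m}. Bs i \<in> ksubsets T (r + t')"
    proof
      fix i assume i: "i \<in> {1..2*Suc m}"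
      show "Bs i \<in> ksubsets T (r + t')"
      proof (cases "i \<le> 2")
        case True
        then show ?thesis using i XY Suc(2,3) by (auto simp: Bs_def ksubsets_def)
      next
        case False
        then have "i - 2 \<in> {1..2*m}" using i by auto
        then show ?thesis using As(1) False by (auto simp: Bs_def)
      qed
    qed
    moreover have "\<forall>i\<in>{1..2*Suc m-1}. card (Bs i \<inter> Bs (i+1)) = t'"
    proof
      fix i assume i: "i \<in> {1..2*Suc m-1}"
      show "card (Bs i \<inter> Bs (i+1)) = t'"
      proof (cases "i \<le> 2")
        case True
        then have "i = 1 \<or> i = 2" using i by auto
        then show ?thesis using XY As(3) by (auto simp: Bs_def)
      next
        case False
        then have "i - 2 \<in> {1..2*m-1}" using i by auto
        moreover have "i + 1 - 2 = (i - 2) + 1" using False by simp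
        ultimately show ?thesis using As(2) False by (auto simp: Bs_def)
      qed
    qed
    moreover have "Bs 1 = B \<and> Bs (2*Suc m) = A" using As(4) m1 by (simp add: Bs_def)
    ultimately show ?thesis by blast
  qed
qed

theorem lemma4p4:
  fixes n t' r :: nat and T A B :: "nat set"
  assumes "n > 0" and "t' > 0" and "r > 0"
    and "T \<subseteq> {1..n}" and "card T = t' + 2 * r"
    and "A \<in> ksubsets T (r + t')" and "B \<in> ksubsets T (r + t')" and "A \<noteq> B"
  shows "let w = card (A \<inter> B) div t' + 1 in
    \<exists>As :: nat \<Rightarrow> nat set.
      (\<forall>i\<in>{1..2*w}. As i \<in> ksubsets T (r + t')) \<and>
      (\<forall>i\<in>{1..2*w-1}. card (As i \<inter> As (i+1)) = t') \<and>
      As 1 = B \<and> As (2*w) = A"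
proof -
  have fin: "finite T" using assms(4) finite_subset by blast
  have "(card (A \<inter> B) + t' - 1) div t' \<le> (card (A \<inter> B) + t') div t'"
    by (simp add: div_le_mono)
  also have "\<dots> = card (A \<inter> B) div t' + 1" using assms(2) div_add_self2[of t' "card (A \<inter> B)"] by simp
  finally have le: "(card (A \<inter> B) + t' - 1) div t' \<le> card (A \<inter> B) div t' + 1" .
  have "A \<subseteq> T" "card A = r + t'" "B \<subseteq> T" "card B = r + t'"
    using assms(6,7) by (auto simp: ksubsets_def)
  from walk[OF fin assms(5) assms(2) this(1,2) this(3,4) le]
  show ?thesis unfolding Let_def .
qed

end
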